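(* Let $N$ be a finite set of players and $E$ a finite set of resources; for each $i\in N$ let $d_i\in\mathbb{N}$ and $E_i\subseteq E$ with $E_i\neq\emptyset$, and for each $e\in E$ let $c_e:\mathbb{N}\to\mathbb{R}_+$ be non-decreasing and convex. Define $f_i(U)=d_i$ if $U\cap E_i\neq\emptyset$ and $f_i(U)=0$ otherwise, and $C_{i,e}(x;t)=c_e(x+t)\,x$. Then each $f_i$ is an integral polymatroid rank function, $\mathbb{B}_{f_i}(d_i)$ is exactly the set of vectors $\vec x_i\in\mathbb{N}^E$ with $x_i(E)=d_i$ and $x_{i,e}=0$ for $e\notin E_i$, and each $C_{i,e}$ is regular; in particular, the singleton integer-splittable congestion game in which player $i$ distributes $d_i$ integral units over $E_i$ and has private cost $\pi_i(\vec x)=\sum_{e\in E}c_e(x_{i,e}+x_{-i,e})x_{i,e}$ is a polymatroid game.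
   Context: $\mathbb{N}=\{0,1,2,\dots\}$. An integral polymatroid rank function is $f:2^E\to\mathbb{N}$ with $f(\emptyset)=0$, monotone and submodular. $x(U)=\sum_{e\in U}x_e$, $\mathbb{B}_f(d)=\{\vec x\in\mathbb{N}^E: x(U)\le f(U)\ \forall U\subseteq E,\ x(E)=d\}$. $x_{-i,e}=\sum_{j\neq i}x_{j,e}$. For $C:\mathbb{N}\times\mathbb{N}\to\mathbb{R}$, $C^-(x;t)=C(x;t)-C(x-1;t)$ for $x\ge1$; $C$ is regular if $C^-(x;t)\le C^-(x;t+1)$ and $C^-(x;t+1)\le C^-(x+1;t)$ for all $x\ge1,t\in\mathbb{N}$. A polymatroid game consists of players $i\in N$ with demands $d_i$, integral polymatroid rank functions $f_i$ on the common resource set $E$, strategy sets $\mathbb{B}_{f_i}(d_i)$, and private costs $\pi_i(\vec x)=\sum_{e\in E}C_{i,e}(x_{i,e};x_{-i,e})$ with every $C_{i,e}:\mathbb{N}\times\mathbb{N}\to\mathbb{R}_+$ regular. *)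

theory Defs
  imports "HOL-Analysis.Analysis"
begin

text \<open>Vectors in N^E are functions 'e => nat that vanish outside the finite ground set E.\<close>

definition integral_polymatroid_rank :: "'e set \<Rightarrow> ('e set \<Rightarrow> nat) \<Rightarrow> bool" where
  "integral_polymatroid_rank E f \<longleftrightarrow>
     f {} = 0 \<and>
     (\<forall>U V. U \<subseteq> V \<and> V \<subseteq> E \<longrightarrow> f U \<le> f V) \<and>
     (\<forall>U V. U \<subseteq> E \<and> V \<subseteq> E \<longrightarrow> f (U \<union> V) + f (U \<inter> V) \<le> f U + f V)"

definition base_polytope :: "'e set \<Rightarrow> ('e set \<Rightarrow> nat) \<Rightarrow> nat \<Rightarrow> ('e \<Rightarrow> nat) set" where
  "base_polytope E f d =
     {x. (\<forall>e. e \<notin> E \<longrightarrow> x e = 0) \<and> (\<forall>U. U \<subseteq> E \<longrightarrow> sum x U \<le> f U) \<and> sum x E = d}"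

definition Cminus :: "(nat \<Rightarrow> nat \<Rightarrow> real) \<Rightarrow> nat \<Rightarrow> nat \<Rightarrow> real" where
  "Cminus C x t = C x t - C (x - 1) t"

definition regular :: "(nat \<Rightarrow> nat \<Rightarrow> real) \<Rightarrow> bool" where
  "regular C \<longleftrightarrow> (\<forall>x t. x \<ge> 1 \<longrightarrow>
      Cminus C x t \<le> Cminus C x (t + 1) \<and> Cminus C x (t + 1) \<le> Cminus C (x + 1) t)"

definition others_load :: "'n set \<Rightarrow> ('n \<Rightarrow> 'e \<Rightarrow> nat) \<Rightarrow> 'n \<Rightarrow> 'e \<Rightarrow> nat" where
  "others_load N x i e = (\<Sum>j\<in>N - {i}. x j e)"

definition private_cost ::
  "'n set \<Rightarrow> 'e set \<Rightarrow> ('n \<Rightarrow> 'e \<Rightarrow> nat \<Rightarrow> nat \<Rightarrow> real) \<Rightarrow> 'n \<Rightarrow> ('n \<Rightarrow> 'e \<Rightarrow> nat) \<Rightarrow> real" where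
  "private_cost N E C i x = (\<Sum>e\<in>E. C i e (x i e) (others_load N x i e))"

text \<open>A polymatroid game (N, E, d, f, C): strategy set of player i is base_polytope E (f i) (d i),
  private cost is private_cost N E C i.\<close>
definition polymatroid_game ::
  "'n set \<Rightarrow> 'e set \<Rightarrow> ('n \<Rightarrow> nat) \<Rightarrow> ('n \<Rightarrow> 'e set \<Rightarrow> nat) \<Rightarrow> ('n \<Rightarrow> 'e \<Rightarrow> nat \<Rightarrow> nat \<Rightarrow> real) \<Rightarrow> bool" where
  "polymatroid_game N E d f C \<longleftrightarrow>
     finite N \<and> finite E \<and>
     (\<forall>i\<in>N. integral_polymatroid_rank E (f i)) \<and>
     (\<forall>i\<in>N. \<forall>e\<in>E. regular (C i e) \<and> (\<forall>x t. C i e x t \<ge> 0))"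

definition convex_nat :: "(nat \<Rightarrow> real) \<Rightarrow> bool" where
  "convex_nat c \<longleftrightarrow> (\<forall>x. c (x + 1) - c x \<le> c (x + 2) - c (x + 1))"

end

theory Submission
  imports Defs
begin

lemma reg_aux:
  fixes c :: "nat \<Rightarrow> real"
  assumes m: "mono c" and cv: "convex_nat c"
  shows "regular (\<lambda>x t. c (x + t) * real x)"
  unfolding regular_def Cminus_def
proof (intro allI impI)
  fix x t :: nat assume "1 \<le> x"
  then obtain k where x: "x = Suc k" by (cases x) auto
  let ?y = "k + t"
  have cvy: "c (?y + 1) - c ?y \<le> c (?y + 2) - c (?y + 1)" using cv unfolding convex_nat_def by blast
  have mb: "c (?y + 1) \<le> c (?y + 2)" using m by (simp add: mono_def)
  have ma: "c ?y \<le> c (?y + 1)" using m by (simp add: mono_def)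
  have e1: "x + t = ?y + 1" "x - 1 + t = ?y" "x + (t+1) = ?y + 2" "x - 1 + (t + 1) = ?y + 1"
    "x + 1 + t = ?y + 2" "x + 1 - 1 + t = ?y + 1" using x by auto
  have r: "real x = real k + 1" using x by simp
  have k0: "0 \<le> real k" by simp
  have A: "c (?y+1) * (real k + 1) - c ?y * real k \<le> c (?y+2) * (real k + 1) - c (?y+1) * real k"
  proof -
    have "real k * ((c (?y + 2) - c (?y + 1)) - (c (?y + 1) - c ?y)) \<ge> 0"
      using cvy k0 by simp
    then show ?thesis using mb by (simp add: algebra_simps)
  qed
  have B: "c (?y+2) * (real k + 1) - c (?y+1) * real k \<le> c (?y+2) * (real k + 2) - c (?y+1) * (real k + 1)"
    using mb by (simp add: algebra_simps)
  show "c (x + t) * real x - c (x - 1 + t) * real (x - 1)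
          \<le> c (x + (t + 1)) * real x - c (x - 1 + (t + 1)) * real (x - 1) \<and>
        c (x + (t + 1)) * real x - c (x - 1 + (t + 1)) * real (x - 1)
          \<le> c (x + 1 + t) * real (x + 1) - c (x + 1 - 1 + t) * real (x + 1 - 1)"
    unfolding e1 using A B x by (simp add: algebra_simps)
qed

theorem proposition4p1:
  fixes N :: "'n set" and E :: "'e set" and d :: "'n \<Rightarrow> nat"
    and Ei :: "'n \<Rightarrow> 'e set" and c :: "'e \<Rightarrow> nat \<Rightarrow> real"
    and f :: "'n \<Rightarrow> 'e set \<Rightarrow> nat" and C :: "'n \<Rightarrow> 'e \<Rightarrow> nat \<Rightarrow> nat \<Rightarrow> real"
  assumes "finite N" and "finite E"
    and "\<forall>i\<in>N. Ei i \<subseteq> E \<and> Ei i \<noteq> {}"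
    and "\<forall>e\<in>E. (\<forall>x. c e x \<ge> 0) \<and> mono (c e) \<and> convex_nat (c e)"
    and f_def: "\<forall>i U. f i U = (if U \<inter> Ei i \<noteq> {} then d i else 0)"
    and C_def: "\<forall>i e x t. C i e x t = c e (x + t) * real x"
  shows "(\<forall>i\<in>N. integral_polymatroid_rank E (f i))
    \<and> (\<forall>i\<in>N. base_polytope E (f i) (d i) =
          {xi. (\<forall>e. e \<notin> E \<longrightarrow> xi e = 0) \<and> sum xi E = d i \<and> (\<forall>e\<in>E. e \<notin> Ei i \<longrightarrow> xi e = 0)})
    \<and> (\<forall>i\<in>N. \<forall>e\<in>E. regular (C i e))
    \<and> polymatroid_game N E d f C
    \<and> (\<forall>i\<in>N. \<forall>x. private_cost N E C i x
          = (\<Sum>e\<in>E. c e (x i e + others_load N x i e) * real (x i e)))"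
proof -
  have Cf: "C i e = (\<lambda>x t. c e (x + t) * real x)" for i e using C_def by (intro ext) auto
  have P1: "\<forall>i\<in>N. integral_polymatroid_rank E (f i)"
    unfolding integral_polymatroid_rank_def using f_def by auto
  have P3: "\<forall>i\<in>N. \<forall>e\<in>E. regular (C i e)"
    using assms(4) reg_aux unfolding Cf by blast
  have P2: "base_polytope E (f i) (d i) =
          {xi. (\<forall>e. e \<notin> E \<longrightarrow> xi e = 0) \<and> sum xi E = d i \<and> (\<forall>e\<in>E. e \<notin> Ei i \<longrightarrow> xi e = 0)}"
    if iN: "i \<in> N" for i
  proof (rule set_eqI, rule iffI)
    fix xi assume "xi \<in> base_polytope E (f i) (d i)"
    hence h: "\<forall>e. e \<notin> E \<longrightarrow> xi e = 0" "\<forall>U. U \<subseteq> E \<longrightarrow> sum xi U \<le> f i U" "sum xi E = d i"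
      unfolding base_polytope_def by auto
    have "sum xi (E - Ei i) \<le> f i (E - Ei i)" using h(2) by blast
    also have "f i (E - Ei i) = 0" using f_def by auto
    finally have "sum xi (E - Ei i) = 0" by simp
    hence "\<forall>e\<in>E - Ei i. xi e = 0" using assms(2) by simp
    thus "xi \<in> {xi. (\<forall>e. e \<notin> E \<longrightarrow> xi e = 0) \<and> sum xi E = d i \<and> (\<forall>e\<in>E. e \<notin> Ei i \<longrightarrow> xi e = 0)}"
      using h by auto
  next
    fix xi assume "xi \<in> {xi. (\<forall>e. e \<notin> E \<longrightarrow> xi e = 0) \<and> sum xi E = d i \<and> (\<forall>e\<in>E. e \<notin> Ei i \<longrightarrow> xi e = 0)}"
    hence h: "\<forall>e. e \<notin> E \<longrightarrow> xi e = 0" "sum xi E = d i" "\<forall>e\<in>E. e \<notin> Ei i \<longrightarrow> xi e = 0" by auto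
    have "sum xi U \<le> f i U" if U: "U \<subseteq> E" for U
    proof (cases "U \<inter> Ei i = {}")
      case True
      hence "\<forall>e\<in>U. xi e = 0" using h(3) U by auto
      thus ?thesis by simp
    next
      case False
      have "sum xi U \<le> sum xi E" using U assms(2) by (intro sum_mono2) auto
      thus ?thesis using False h(2) f_def by simp
    qed
    thus "xi \<in> base_polytope E (f i) (d i)" unfolding base_polytope_def using h by auto
  qed
  have P4: "polymatroid_game N E d f C"
    unfolding polymatroid_game_def using assms(1,2,4) P1 P3 by (auto simp: Cf)
  have P5: "\<forall>i\<in>N. \<forall>x. private_cost N E C i x
          = (\<Sum>e\<in>E. c e (x i e + others_load N x i e) * real (x i e))"
    unfolding private_cost_def Cf by simp
  show ?thesis using P1 P2 P3 P4 P5 by blast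
qed

end
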